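(* There exists a gadget $H$ (in the sense defined in the context) among whose half-edges are three distinguished half-edges $e_1,e_2,e_3$, such that: (a) $\rho(v)\le 1$ and $\delta(v)\le 1$ for every vertex $v$ of $H$; (b) for every assignment in which each of $e_1,e_2,e_3$ is directed either toward its endpoint in $H$ or away from it, with at least one of them directed toward its endpoint, there exists an orientation of $H$ extending this assignment; (c) there is no orientation of $H$ in which all three of $e_1,e_2,e_3$ are directed away from their endpoints in $H$.
   Context: A gadget $H$ consists of a finite simple graph with vertex set $V(H)$ and edge set $E(H)$, a finite set of "half-edges" (unfinished edges), each attached to exactly one vertex of $V(H)$ (its endpoint), and prescribed functions $\rho,\delta,\theta: V(H)\to\mathbb{Z}_{\ge 0}$ with $\rho(v)+\delta(v)+\theta(v)$ equal to the number of edges and half-edges incident to $v$. An orientation of $H$ assigns to each edge of $E(H)$ either one of its two directions or "undirected", and to each half-edge either "directed toward its endpoint", "directed away from its endpoint", or "undirected", such that each vertex $v$ has exactly $\rho(v)$ incident edges/half-edges directed into $v$, exactly $\delta(v)$ directed out of $v$, and exactly $\theta(v)$ undirected. Half-edges other than $e_1,e_2,e_3$ are unconstrained in an orientation. *)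

theory Defs
  imports Main
begin

definition gadget ::
  "'v set \<Rightarrow> 'v set set \<Rightarrow> 'h set \<Rightarrow> ('h \<Rightarrow> 'v) \<Rightarrow>
   ('v \<Rightarrow> nat) \<Rightarrow> ('v \<Rightarrow> nat) \<Rightarrow> ('v \<Rightarrow> nat) \<Rightarrow> bool" where
  "gadget V E Hs endp \<rho> \<delta> \<theta> \<longleftrightarrow>
     finite V \<and> finite Hs \<and>
     (\<forall>e\<in>E. \<exists>u w. u \<noteq> w \<and> u \<in> V \<and> w \<in> V \<and> e = {u, w}) \<and>
     (\<forall>h\<in>Hs. endp h \<in> V) \<and>
     (\<forall>v\<in>V. \<rho> v + \<delta> v + \<theta> v =
        card {e\<in>E. v \<in> e} + card {h\<in>Hs. endp h = v})"

datatype hdir = Toward | Away | Undirected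

text \<open>An orientation: eo assigns to each edge either Some w (directed into its end w)
or None (undirected); ho assigns a direction to each half-edge.\<close>
definition orientation ::
  "'v set \<Rightarrow> 'v set set \<Rightarrow> 'h set \<Rightarrow> ('h \<Rightarrow> 'v) \<Rightarrow>
   ('v \<Rightarrow> nat) \<Rightarrow> ('v \<Rightarrow> nat) \<Rightarrow> ('v \<Rightarrow> nat) \<Rightarrow>
   ('v set \<Rightarrow> 'v option) \<Rightarrow> ('h \<Rightarrow> hdir) \<Rightarrow> bool" where
  "orientation V E Hs endp \<rho> \<delta> \<theta> eo ho \<longleftrightarrow>
     (\<forall>e\<in>E. eo e = None \<or> (\<exists>w\<in>e. eo e = Some w)) \<and>
     (\<forall>v\<in>V.
        card {e\<in>E. v \<in> e \<and> eo e = Some v} + card {h\<in>Hs. endp h = v \<and> ho h = Toward} = \<rho> v \<and>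
        card {e\<in>E. v \<in> e \<and> eo e \<noteq> None \<and> eo e \<noteq> Some v}
          + card {h\<in>Hs. endp h = v \<and> ho h = Away} = \<delta> v \<and>
        card {e\<in>E. v \<in> e \<and> eo e = None} + card {h\<in>Hs. endp h = v \<and> ho h = Undirected} = \<theta> v)"

end

theory Submission imports Defs begin

lemma filt_ins: "{x \<in> insert a A. P x} = (if P a then insert a {x\<in>A. P x} else {x\<in>A. P x})" by auto
lemma filt_empty: "{x \<in> {}. P x} = {}" by auto

definition "VV = {0,1,2,3::nat}"
definition "EE = {{0,1},{0,2},{0,3::nat}}"
definition "HH = {1,2,3,4,5,6::nat}"
definition "en = (\<lambda>h::nat. if h \<le> 3 then h else h - 3)"
definition "rr = (\<lambda>v::nat. 1::nat)"
definition "dd = (\<lambda>v::nat. if v = 0 then 0 else 1::nat)"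
definition "tt = (\<lambda>v::nat. if v = 0 then 2 else 1::nat)"

lemmas U = VV_def EE_def HH_def en_def rr_def dd_def tt_def filt_ins filt_empty doubleton_eq_iff
lemma gE: "\<forall>e\<in>EE. \<exists>u w. u \<noteq> w \<and> u \<in> VV \<and> w \<in> VV \<and> e = {u, w}"
  unfolding EE_def VV_def
  apply (simp only: ball_simps)
  apply (intro conjI TrueI)
    apply (rule exI[of _ 0], rule exI[of _ 1], simp)
   apply (rule exI[of _ 0], rule exI[of _ 2], simp)
  apply (rule exI[of _ 0], rule exI[of _ 3], simp)
  done
lemma g: "gadget VV EE HH en rr dd tt"
  unfolding gadget_def using gE
  by (simp only: VV_def EE_def HH_def filt_ins filt_empty ball_simps) (simp add: U)
lemma neg: "\<not> (\<exists>eo ho. orientation VV EE HH en rr dd tt eo ho \<and> ho 1 = Away \<and> ho 2 = Away \<and> ho 3 = Away)"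
proof
  assume "\<exists>eo ho. orientation VV EE HH en rr dd tt eo ho \<and> ho 1 = Away \<and> ho 2 = Away \<and> ho 3 = Away"
  then obtain eo ho where o: "orientation VV EE HH en rr dd tt eo ho" and a: "ho 1 = Away" "ho 2 = Away" "ho 3 = Away" by blast
  have e: "\<forall>e\<in>EE. eo e = None \<or> (\<exists>w\<in>e. eo e = Some w)" using o unfolding orientation_def by blast
  have c: "\<forall>v\<in>VV. card {e\<in>EE. v \<in> e \<and> eo e = Some v} + card {h\<in>HH. en h = v \<and> ho h = Toward} = rr v \<and>
        card {e\<in>EE. v \<in> e \<and> eo e \<noteq> None \<and> eo e \<noteq> Some v}
          + card {h\<in>HH. en h = v \<and> ho h = Away} = dd v" using o unfolding orientation_def by blast
  have e1: "eo {0,1} = None \<or> eo {0,1} = Some 0 \<or> eo {0,1} = Some 1" using e by (auto simp: EE_def)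
  have e2: "eo {0,2} = None \<or> eo {0,2} = Some 0 \<or> eo {0,2} = Some 2" using e by (auto simp: EE_def)
  have e3: "eo {0,3} = None \<or> eo {0,3} = Some 0 \<or> eo {0,3} = Some 3" using e by (auto simp: EE_def)
  show False using e1 e2 e3 c a
    apply (simp only: VV_def EE_def HH_def filt_ins filt_empty ball_simps)
    by (elim disjE) (simp_all add: U)
qed
lemma t_TTT: "orientation VV EE HH en rr dd tt (\<lambda>e. if e = {0,1} then Some 0 else None)
   (\<lambda>h. if h = 1 then Toward else if h = 2 then Toward else if h = 3 then Toward else if h = 4 then Undirected else if h = 5 then Away else Away)"
  unfolding orientation_def
  apply (simp only: VV_def EE_def HH_def filt_ins filt_empty ball_simps)
  by (simp add: U)

lemma t_TTA: "orientation VV EE HH en rr dd tt (\<lambda>e. if e = {0,1} then Some 0 else None)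
   (\<lambda>h. if h = 1 then Toward else if h = 2 then Toward else if h = 3 then Away else if h = 4 then Undirected else if h = 5 then Away else Toward)"
  unfolding orientation_def
  apply (simp only: VV_def EE_def HH_def filt_ins filt_empty ball_simps)
  by (simp add: U)

lemma t_TAT: "orientation VV EE HH en rr dd tt (\<lambda>e. if e = {0,1} then Some 0 else None)
   (\<lambda>h. if h = 1 then Toward else if h = 2 then Away else if h = 3 then Toward else if h = 4 then Undirected else if h = 5 then Toward else Away)"
  unfolding orientation_def
  apply (simp only: VV_def EE_def HH_def filt_ins filt_empty ball_simps)
  by (simp add: U)

lemma t_TAA: "orientation VV EE HH en rr dd tt (\<lambda>e. if e = {0,1} then Some 0 else None)
   (\<lambda>h. if h = 1 then Toward else if h = 2 then Away else if h = 3 then Away else if h = 4 then Undirected else if h = 5 then Toward else Toward)"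
  unfolding orientation_def
  apply (simp only: VV_def EE_def HH_def filt_ins filt_empty ball_simps)
  by (simp add: U)

lemma t_ATT: "orientation VV EE HH en rr dd tt (\<lambda>e. if e = {0,2} then Some 0 else None)
   (\<lambda>h. if h = 1 then Away else if h = 2 then Toward else if h = 3 then Toward else if h = 4 then Toward else if h = 5 then Undirected else Away)"
  unfolding orientation_def
  apply (simp only: VV_def EE_def HH_def filt_ins filt_empty ball_simps)
  by (simp add: U)

lemma t_ATA: "orientation VV EE HH en rr dd tt (\<lambda>e. if e = {0,2} then Some 0 else None)
   (\<lambda>h. if h = 1 then Away else if h = 2 then Toward else if h = 3 then Away else if h = 4 then Toward else if h = 5 then Undirected else Toward)"
  unfolding orientation_def
  apply (simp only: VV_def EE_def HH_def filt_ins filt_empty ball_simps)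
  by (simp add: U)

lemma t_AAT: "orientation VV EE HH en rr dd tt (\<lambda>e. if e = {0,3} then Some 0 else None)
   (\<lambda>h. if h = 1 then Away else if h = 2 then Away else if h = 3 then Toward else if h = 4 then Toward else if h = 5 then Toward else Undirected)"
  unfolding orientation_def
  apply (simp only: VV_def EE_def HH_def filt_ins filt_empty ball_simps)
  by (simp add: U)

lemma pos: "d1 \<noteq> Undirected \<and> d2 \<noteq> Undirected \<and> d3 \<noteq> Undirected \<and>
        (d1 = Toward \<or> d2 = Toward \<or> d3 = Toward) \<Longrightarrow>
        (\<exists>eo ho. orientation VV EE HH en rr dd tt eo ho \<and>
                 ho 1 = d1 \<and> ho 2 = d2 \<and> ho 3 = d3)"
  apply (cases d1; cases d2; cases d3; simp only: hdir.distinct simp_thms)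

  by (fastforce intro: t_TTT t_TTA t_TAT t_TAA t_ATT t_ATA t_AAT)+
theorem lemma5:
  shows "\<exists>(V::nat set) (E::nat set set) (Hs::nat set) (endp::nat \<Rightarrow> nat)
           (\<rho>::nat \<Rightarrow> nat) (\<delta>::nat \<Rightarrow> nat) (\<theta>::nat \<Rightarrow> nat) e1 e2 e3.
     gadget V E Hs endp \<rho> \<delta> \<theta> \<and>
     e1 \<in> Hs \<and> e2 \<in> Hs \<and> e3 \<in> Hs \<and> e1 \<noteq> e2 \<and> e1 \<noteq> e3 \<and> e2 \<noteq> e3 \<and>
     (\<forall>v\<in>V. \<rho> v \<le> 1 \<and> \<delta> v \<le> 1) \<and>
     (\<forall>d1 d2 d3. d1 \<noteq> Undirected \<and> d2 \<noteq> Undirected \<and> d3 \<noteq> Undirected \<and>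
        (d1 = Toward \<or> d2 = Toward \<or> d3 = Toward) \<longrightarrow>
        (\<exists>eo ho. orientation V E Hs endp \<rho> \<delta> \<theta> eo ho \<and>
                 ho e1 = d1 \<and> ho e2 = d2 \<and> ho e3 = d3)) \<and>
     \<not> (\<exists>eo ho. orientation V E Hs endp \<rho> \<delta> \<theta> eo ho \<and>
                 ho e1 = Away \<and> ho e2 = Away \<and> ho e3 = Away)"
  apply (rule exI[of _ VV], rule exI[of _ EE], rule exI[of _ HH], rule exI[of _ en],
         rule exI[of _ rr], rule exI[of _ dd], rule exI[of _ tt], rule exI[of _ 1], rule exI[of _ 2], rule exI[of _ 3])
  using g neg pos by (simp add: VV_def HH_def rr_def dd_def)

end
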